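(* Let $G$ be a group generated by involutions (elements $i$ with $i^2=e$) and $H$ an abelian group (written additively). Assume $f:G\to H$ satisfies $f(xy)+f(xy^{-1})=2f(x)$ for all $x,y\in G$, with $f(e)=0$. Then: (I) $f(xyz)=f(xzy)$ for all $x,y,z\in G$. (II) Consequently, for any word $g=i_1\cdots i_r$ in involutions, swapping any adjacent pair $i_k,i_{k+1}$ does not change the value $f(g)$. *)

theory Defs
  imports "HOL-Algebra.Algebra"
begin

definition word_prod :: "('a, 'b) monoid_scheme \<Rightarrow> 'a list \<Rightarrow> 'a" where
  "word_prod G ws = foldr (\<lambda>a b. a \<otimes>\<^bsub>G\<^esub> b) ws \<one>\<^bsub>G\<^esub>"

definition involutions :: "('a, 'b) monoid_scheme \<Rightarrow> 'a set" where
  "involutions G = {i \<in> carrier G. i \<otimes>\<^bsub>G\<^esub> i = \<one>\<^bsub>G\<^esub>}"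

end

theory Submission
  imports Defs
begin

lemma (in group) jensen_conj_inv:
  fixes h :: "'a \<Rightarrow> 'z::ab_group_add"
  assumes J: "\<And>x y. x \<in> carrier G \<Longrightarrow> y \<in> carrier G \<Longrightarrow> h (x \<otimes> y) + h (x \<otimes> inv y) = h x + h x"
    and i: "i \<in> carrier G" "i \<otimes> i = \<one>" and w: "w \<in> carrier G"
  shows "h (i \<otimes> w \<otimes> i) = h w"
proof -
  have invi: "inv i = i" by (rule inv_equality[OF i(2) i(1) i(1)])
  have e: "i \<otimes> inv (w \<otimes> i) = inv w"
    using i w invi by (simp add: inv_mult_group m_assoc[symmetric])
  have 1: "h (i \<otimes> w \<otimes> i) + h (inv w) = h i + h i"
    using J[of i "w \<otimes> i"] i w e by (simp add: m_assoc)
  have 2: "h w + h (inv w) = h \<one> + h \<one>" using J[of \<one> w] w by simp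
  have 3: "h i + h i = h \<one> + h \<one>" using J[of \<one> i] i invi by simp
  have "h (i \<otimes> w \<otimes> i) + h (inv w) = h w + h (inv w)" using 1 2 3 by simp
  then show ?thesis by simp
qed

lemma (in group) jensen_conj:
  fixes h :: "'a \<Rightarrow> 'z::ab_group_add"
  assumes J: "\<And>x y. x \<in> carrier G \<Longrightarrow> y \<in> carrier G \<Longrightarrow> h (x \<otimes> y) + h (x \<otimes> inv y) = h x + h x"
    and g: "g \<in> generate G (involutions G)"
  shows "\<forall>w\<in>carrier G. h (g \<otimes> w \<otimes> inv g) = h w"
  using g
proof (induction rule: generate.induct)
  case one
  then show ?case by simp
next
  case (incl i)
  then have i: "i \<in> carrier G" "i \<otimes> i = \<one>" by (auto simp: involutions_def)
  have ii: "inv i = i" by (rule inv_equality[OF i(2) i(1) i(1)])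
  show ?case
  proof
    fix w assume w: "w \<in> carrier G"
    show "h (i \<otimes> w \<otimes> inv i) = h w" unfolding ii by (rule jensen_conj_inv[OF J i w])
  qed
next
  case (inv i)
  then have i: "i \<in> carrier G" "i \<otimes> i = \<one>" by (auto simp: involutions_def)
  have ii: "inv i = i" by (rule inv_equality[OF i(2) i(1) i(1)])
  show ?case
  proof
    fix w assume w: "w \<in> carrier G"
    show "h (inv i \<otimes> w \<otimes> inv (inv i)) = h w" unfolding ii by (rule jensen_conj_inv[OF J i w])
  qed
next
  case (eng g1 g2)
  have c1: "g1 \<in> carrier G" "g2 \<in> carrier G"
  proof -
    have sub: "involutions G \<subseteq> carrier G" by (auto simp: involutions_def)
    show "g1 \<in> carrier G" by (rule generate_in_carrier[OF sub eng.hyps(1)])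
    show "g2 \<in> carrier G" by (rule generate_in_carrier[OF sub eng.hyps(2)])
  qed
  show ?case
  proof
    fix w assume w: "w \<in> carrier G"
    have "g1 \<otimes> g2 \<otimes> w \<otimes> inv (g1 \<otimes> g2) = g1 \<otimes> (g2 \<otimes> w \<otimes> inv g2) \<otimes> inv g1"
      using c1 w by (simp add: inv_mult_group m_assoc)
    moreover have "h (g1 \<otimes> (g2 \<otimes> w \<otimes> inv g2) \<otimes> inv g1) = h (g2 \<otimes> w \<otimes> inv g2)"
      using eng.IH(1) c1 w by blast
    moreover have "h (g2 \<otimes> w \<otimes> inv g2) = h w"
      using eng.IH(2) w by blast
    ultimately show "h (g1 \<otimes> g2 \<otimes> w \<otimes> inv (g1 \<otimes> g2)) = h w"
      by simp
  qed
qed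

lemma (in group) main_aux:
  fixes f :: "'a \<Rightarrow> 'z::ab_group_add"
  assumes "carrier G = generate G (involutions G)"
    and "\<And>x y. x \<in> carrier G \<Longrightarrow> y \<in> carrier G \<Longrightarrow>
           f (x \<otimes> y) + f (x \<otimes> inv y) = f x + f x"
  shows "(\<forall>x\<in>carrier G. \<forall>y\<in>carrier G. \<forall>z\<in>carrier G.
            f (x \<otimes> y \<otimes> z) = f (x \<otimes> z \<otimes> y))
       \<and> (\<forall>ws k. set ws \<subseteq> involutions G \<longrightarrow> Suc k < length ws \<longrightarrow>
            f (word_prod G (ws[k := ws ! Suc k, Suc k := ws ! k])) = f (word_prod G ws))"
proof -
  have I: "\<forall>x\<in>carrier G. \<forall>y\<in>carrier G. \<forall>z\<in>carrier G.
            f (x \<otimes> y \<otimes> z) = f (x \<otimes> z \<otimes> y)"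
  proof (intro ballI)
    fix x y z assume x: "x \<in> carrier G" and y: "y \<in> carrier G" and z: "z \<in> carrier G"
    define h where "h = (\<lambda>u. f (x \<otimes> u))"
    have J: "\<And>u v. u \<in> carrier G \<Longrightarrow> v \<in> carrier G \<Longrightarrow> h (u \<otimes> v) + h (u \<otimes> inv v) = h u + h u"
      unfolding h_def using assms(2) x by (simp add: m_assoc[symmetric])
    have zg: "z \<in> generate G (involutions G)" using z assms(1) by simp
    have "h (z \<otimes> (y \<otimes> z) \<otimes> inv z) = h (y \<otimes> z)"
      using jensen_conj[OF J zg] y z by simp
    moreover have "z \<otimes> (y \<otimes> z) \<otimes> inv z = z \<otimes> y"
      using y z by (simp add: m_assoc)
    ultimately show "f (x \<otimes> y \<otimes> z) = f (x \<otimes> z \<otimes> y)"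
      unfolding h_def using x y z by (simp add: m_assoc)
  qed
  have wc: "set ws \<subseteq> carrier G \<Longrightarrow> word_prod G ws \<in> carrier G" for ws
    unfolding word_prod_def by (induction ws) auto
  have app: "word_prod G (as @ bs) = word_prod G as \<otimes> word_prod G bs"
    if "set as \<subseteq> carrier G" "set bs \<subseteq> carrier G" for as bs
    using that unfolding word_prod_def
    by (induction as) (auto simp: m_assoc foldr_append wc[unfolded word_prod_def])
  have II: "f (word_prod G (ws[k := ws ! Suc k, Suc k := ws ! k])) = f (word_prod G ws)"
    if ws: "set ws \<subseteq> involutions G" and k: "Suc k < length ws" for ws k
  proof -
    define a where "a = take k ws"
    define r where "r = drop (Suc (Suc k)) ws"
    define i where "i = ws ! k"
    define j where "j = ws ! Suc k"
    have wsc: "set ws \<subseteq> carrier G" using ws by (auto simp: involutions_def)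
    have dec: "ws = a @ [i, j] @ r"
    proof -
      have "ws = take k ws @ drop k ws" by simp
      also have "drop k ws = ws ! k # ws ! Suc k # drop (Suc (Suc k)) ws"
        using k by (simp add: Cons_nth_drop_Suc)
      finally show ?thesis unfolding a_def r_def i_def j_def by simp
    qed
    have la: "length a = k" unfolding a_def using k by simp
    have dec2: "ws[k := ws ! Suc k, Suc k := ws ! k] = a @ [j, i] @ r"
    proof -
      have "(a @ [i, j] @ r)[k := j, Suc k := i] = a @ [j, i] @ r"
        using la by (simp add: list_update_append)
      moreover have "ws[k := j, Suc k := i] = (a @ [i, j] @ r)[k := j, Suc k := i]"
        using dec by (rule arg_cong)
      ultimately have "ws[k := j, Suc k := i] = a @ [j, i] @ r" by simp
      then show ?thesis by (simp only: i_def j_def)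
    qed
    have sa: "set a \<subseteq> carrier G" and sr: "set r \<subseteq> carrier G" and ij: "i \<in> carrier G" "j \<in> carrier G"
      using wsc dec by (auto simp del: append_Cons)
    define A where "A = word_prod G a"
    define R where "R = word_prod G r"
    have AR: "A \<in> carrier G" "R \<in> carrier G" using wc sa sr unfolding A_def R_def by auto
    have e1: "word_prod G ws = A \<otimes> (i \<otimes> (j \<otimes> R))"
      using dec app[of a "[i, j] @ r"] sa sr ij unfolding A_def R_def by (simp add: word_prod_def)
    have e2: "word_prod G (ws[k := ws ! Suc k, Suc k := ws ! k]) = A \<otimes> (j \<otimes> (i \<otimes> R))"
      using dec2 app[of a "[j, i] @ r"] sa sr ij unfolding A_def R_def by (simp add: word_prod_def)
    have "f (A \<otimes> i \<otimes> (j \<otimes> R)) = f (A \<otimes> (j \<otimes> R) \<otimes> i)" using I AR ij by simp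
    moreover have "f (A \<otimes> j \<otimes> i \<otimes> R) = f (A \<otimes> j \<otimes> R \<otimes> i)" using I AR ij by simp
    ultimately show ?thesis using e1 e2 AR ij by (simp add: m_assoc)
  qed
  show ?thesis using I II by blast
qed

theorem mainTheorem4:
  fixes G :: "('a, 'c) monoid_scheme" and f :: "'a \<Rightarrow> 'b::ab_group_add"
  assumes "group G"
    and "carrier G = generate G (involutions G)"
    and "\<And>x y. x \<in> carrier G \<Longrightarrow> y \<in> carrier G \<Longrightarrow>
           f (x \<otimes>\<^bsub>G\<^esub> y) + f (x \<otimes>\<^bsub>G\<^esub> inv\<^bsub>G\<^esub> y) = f x + f x"
    and "f \<one>\<^bsub>G\<^esub> = 0"
  shows "(\<forall>x\<in>carrier G. \<forall>y\<in>carrier G. \<forall>z\<in>carrier G.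
            f (x \<otimes>\<^bsub>G\<^esub> y \<otimes>\<^bsub>G\<^esub> z) = f (x \<otimes>\<^bsub>G\<^esub> z \<otimes>\<^bsub>G\<^esub> y))
       \<and> (\<forall>ws k. set ws \<subseteq> involutions G \<longrightarrow> Suc k < length ws \<longrightarrow>
            f (word_prod G (ws[k := ws ! Suc k, Suc k := ws ! k])) = f (word_prod G ws))"
  using group.main_aux[OF assms(1) assms(2) assms(3)] .

end
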